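(* Let $I$ be a finite group and $l$ a positive integer coprime to $|I|$. Let $G=\mathbb{Z}/l\mathbb{Z}\wr I=(\mathbb{Z}/l\mathbb{Z})^I\rtimes I$ and let $I_1\le G$ be a subgroup isomorphic to $I$. Then $\bigcap_{g\in G} gI_1g^{-1}=\{e\}$; that is, the largest subgroup of $I_1$ that is normal in $G$ is trivial.
   Context: In the wreath product, $(\mathbb{Z}/l\mathbb{Z})^I$ is the group of functions $I\to\mathbb{Z}/l\mathbb{Z}$, and $I$ acts on it by permuting coordinates via left translation; $q:G\to I$ denotes the canonical projection. *)

theory Defs
  imports "HOL-Algebra.Algebra"
begin

text \<open>I acts on (Z/lZ)^I by
  left translation: (a \<cdot> f)(x) = f(a\<inverse> x).\<close>

definition wreath_cyclic :: "('a, 'b) monoid_scheme \<Rightarrow> nat \<Rightarrow> (('a \<Rightarrow> nat) \<times> 'a) monoid" where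
  "wreath_cyclic I l =
    \<lparr> carrier = (carrier I \<rightarrow>\<^sub>E {..<l}) \<times> carrier I,
      monoid.mult = (\<lambda>(f, a) (g, b).
                ((\<lambda>x\<in>carrier I. (f x + g (inv\<^bsub>I\<^esub> a \<otimes>\<^bsub>I\<^esub> x)) mod l), a \<otimes>\<^bsub>I\<^esub> b)),
      monoid.one = ((\<lambda>x\<in>carrier I. 0), \<one>\<^bsub>I\<^esub>) \<rparr>"

end

theory Submission
  imports Defs
begin

lemma wc_carrier: "carrier (wreath_cyclic I l) = (carrier I \<rightarrow>\<^sub>E {..<l}) \<times> carrier I"
  by (simp add: wreath_cyclic_def)
lemma wc_mult: "(f, a) \<otimes>\<^bsub>wreath_cyclic I l\<^esub> (g, b) =
   ((\<lambda>x\<in>carrier I. (f x + g (inv\<^bsub>I\<^esub> a \<otimes>\<^bsub>I\<^esub> x)) mod l), a \<otimes>\<^bsub>I\<^esub> b)"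
  by (simp add: wreath_cyclic_def)
lemma wc_one: "\<one>\<^bsub>wreath_cyclic I l\<^esub> = ((\<lambda>x\<in>carrier I. 0), \<one>\<^bsub>I\<^esub>)"
  by (simp add: wreath_cyclic_def)

lemma wc_group:
  assumes I: "group I" and l: "l > 0"
  shows "group (wreath_cyclic I l)"
proof (rule groupI)
  interpret I: group I by fact
  let ?G = "wreath_cyclic I l"
  show "\<And>x y. x \<in> carrier ?G \<Longrightarrow> y \<in> carrier ?G \<Longrightarrow> x \<otimes>\<^bsub>?G\<^esub> y \<in> carrier ?G"
    using l by (auto simp: wc_carrier wc_mult)
  show "\<one>\<^bsub>?G\<^esub> \<in> carrier ?G" using l by (auto simp: wc_carrier wc_one)
  show "x \<otimes>\<^bsub>?G\<^esub> y \<otimes>\<^bsub>?G\<^esub> z = x \<otimes>\<^bsub>?G\<^esub> (y \<otimes>\<^bsub>?G\<^esub> z)"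
    if "x \<in> carrier ?G" "y \<in> carrier ?G" "z \<in> carrier ?G" for x y z
  proof -
    obtain f a g b h c where xyz: "x = (f,a)" "y = (g,b)" "z = (h,c)" by (metis prod.exhaust)
    with that have a: "a \<in> carrier I" and b: "b \<in> carrier I" and c: "c \<in> carrier I" by (auto simp: wc_carrier)
    have "(\<lambda>xa\<in>carrier I. ((\<lambda>x\<in>carrier I. (f x + g (inv\<^bsub>I\<^esub> a \<otimes>\<^bsub>I\<^esub> x)) mod l) xa + h (inv\<^bsub>I\<^esub> (a \<otimes>\<^bsub>I\<^esub> b) \<otimes>\<^bsub>I\<^esub> xa)) mod l)
      = (\<lambda>xa\<in>carrier I. (f xa + (\<lambda>x\<in>carrier I. (g x + h (inv\<^bsub>I\<^esub> b \<otimes>\<^bsub>I\<^esub> x)) mod l) (inv\<^bsub>I\<^esub> a \<otimes>\<^bsub>I\<^esub> xa)) mod l)"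
    proof (rule restrict_ext)
      fix u assume u: "u \<in> carrier I"
      have e: "inv\<^bsub>I\<^esub> (a \<otimes>\<^bsub>I\<^esub> b) \<otimes>\<^bsub>I\<^esub> u = inv\<^bsub>I\<^esub> b \<otimes>\<^bsub>I\<^esub> (inv\<^bsub>I\<^esub> a \<otimes>\<^bsub>I\<^esub> u)"
        using a b u by (simp add: I.inv_mult_group I.m_assoc)
      show "((\<lambda>x\<in>carrier I. (f x + g (inv\<^bsub>I\<^esub> a \<otimes>\<^bsub>I\<^esub> x)) mod l) u + h (inv\<^bsub>I\<^esub> (a \<otimes>\<^bsub>I\<^esub> b) \<otimes>\<^bsub>I\<^esub> u)) mod l
        = (f u + (\<lambda>x\<in>carrier I. (g x + h (inv\<^bsub>I\<^esub> b \<otimes>\<^bsub>I\<^esub> x)) mod l) (inv\<^bsub>I\<^esub> a \<otimes>\<^bsub>I\<^esub> u)) mod l"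
        using a u by (simp add: e mod_add_left_eq mod_add_right_eq add.assoc)
    qed
    then show ?thesis using xyz a b c by (simp add: wc_mult I.m_assoc)
  qed
  show "\<one>\<^bsub>?G\<^esub> \<otimes>\<^bsub>?G\<^esub> x = x" if "x \<in> carrier ?G" for x
  proof -
    obtain f a where x: "x = (f,a)" by (metis prod.exhaust)
    with that have a: "a \<in> carrier I" and f: "f \<in> carrier I \<rightarrow>\<^sub>E {..<l}" by (auto simp: wc_carrier)
    have "(\<lambda>u\<in>carrier I. ((\<lambda>x\<in>carrier I. 0) u + f (inv\<^bsub>I\<^esub> \<one>\<^bsub>I\<^esub> \<otimes>\<^bsub>I\<^esub> u)) mod l) = f"
      using f by (auto simp: fun_eq_iff PiE_def extensional_def Pi_def)
    then show ?thesis using x a by (simp add: wc_one wc_mult)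
  qed
  show "\<exists>y\<in>carrier ?G. y \<otimes>\<^bsub>?G\<^esub> x = \<one>\<^bsub>?G\<^esub>" if "x \<in> carrier ?G" for x
  proof -
    obtain f a where x: "x = (f,a)" by (metis prod.exhaust)
    with that have a: "a \<in> carrier I" and f: "f \<in> carrier I \<rightarrow>\<^sub>E {..<l}" by (auto simp: wc_carrier)
    let ?y = "((\<lambda>u\<in>carrier I. (l - f (a \<otimes>\<^bsub>I\<^esub> u)) mod l), inv\<^bsub>I\<^esub> a)"
    have "?y \<in> carrier ?G" using a l by (auto simp: wc_carrier)
    moreover have "?y \<otimes>\<^bsub>?G\<^esub> x = \<one>\<^bsub>?G\<^esub>"
    proof -
      have "f (a \<otimes>\<^bsub>I\<^esub> u) < l" if "u \<in> carrier I" for u using f a that by auto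
      then have "(\<lambda>u\<in>carrier I. ((\<lambda>u\<in>carrier I. (l - f (a \<otimes>\<^bsub>I\<^esub> u)) mod l) u + f (inv\<^bsub>I\<^esub> (inv\<^bsub>I\<^esub> a) \<otimes>\<^bsub>I\<^esub> u)) mod l)
          = (\<lambda>x\<in>carrier I. 0)"
        using a by (auto intro!: restrict_ext simp: mod_add_left_eq) (metis le_add_diff_inverse2 less_imp_le mod_self)
      then show ?thesis using x a by (simp add: wc_one wc_mult)
    qed
    ultimately show ?thesis by blast
  qed
qed

lemma wc_snd_hom:
  assumes "group I"
  shows "snd \<in> hom (wreath_cyclic I l) I"
  by (rule homI) (auto simp: wc_carrier wreath_cyclic_def split: prod.splits)

lemma wc_pow:
  assumes I: "group I" and f: "f \<in> carrier I \<rightarrow>\<^sub>E {..<l}"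
  shows "(f, \<one>\<^bsub>I\<^esub>) [^]\<^bsub>wreath_cyclic I l\<^esub> (n::nat) = ((\<lambda>x\<in>carrier I. (n * f x) mod l), \<one>\<^bsub>I\<^esub>)"
proof (induction n)
  case 0
  then show ?case by (simp add: wc_one restrict_def)
next
  case (Suc n)
  interpret I: group I by fact
  have "(\<lambda>x\<in>carrier I. ((\<lambda>x\<in>carrier I. (n * f x) mod l) x + f (inv\<^bsub>I\<^esub> \<one>\<^bsub>I\<^esub> \<otimes>\<^bsub>I\<^esub> x)) mod l)
     = (\<lambda>x\<in>carrier I. (Suc n * f x) mod l)"
    by (auto intro!: restrict_ext simp: mod_add_left_eq mod_add_right_eq add.commute)
  then show ?case using Suc by (simp add: wc_mult restrict_def)
qed

lemma mod_suc_ne: "(k::nat) < l \<Longrightarrow> 2 \<le> l \<Longrightarrow> (k + 1) mod l \<noteq> k"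
proof (cases "k + 1 < l")
  case False
  assume "k < l" "2 \<le> l"
  with False have "k + 1 = l" by simp
  then have "(k + 1) mod l = 0" by simp
  then show ?thesis using \<open>k + 1 = l\<close> \<open>2 \<le> l\<close> by auto
qed auto

theorem mainTheorem3:
  fixes I :: "('a, 'b) monoid_scheme" and l :: nat and H :: "(('a \<Rightarrow> nat) \<times> 'a) set"
  assumes "group I" and "finite (carrier I)"
    and "l \<ge> 2" and "coprime l (order I)"
    and "subgroup H (wreath_cyclic I l)"
    and "(wreath_cyclic I l)\<lparr>carrier := H\<rparr> \<cong> I"
  shows "(\<Inter>g\<in>carrier (wreath_cyclic I l).
            {g \<otimes>\<^bsub>wreath_cyclic I l\<^esub> h \<otimes>\<^bsub>wreath_cyclic I l\<^esub> inv\<^bsub>wreath_cyclic I l\<^esub> g | h. h \<in> H})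
         = {\<one>\<^bsub>wreath_cyclic I l\<^esub>}"
proof -
  let ?G = "wreath_cyclic I l"
  interpret I: group I by fact
  interpret G: group ?G using wc_group[OF assms(1)] assms(3) by simp
  interpret H: subgroup H ?G by fact
  interpret S: group_hom ?G I snd
    using wc_snd_hom[OF assms(1)] by (unfold_locales) auto
  have triv: "x = \<one>\<^bsub>?G\<^esub>" if x: "x \<in> H" "snd x = \<one>\<^bsub>I\<^esub>" for x
  proof -
    obtain f where xf: "x = (f, \<one>\<^bsub>I\<^esub>)" using x(2) by (metis prod.collapse)
    have xc: "x \<in> carrier ?G" using x by auto
    then have f: "f \<in> carrier I \<rightarrow>\<^sub>E {..<l}" using xf by (simp add: wc_carrier)
    have "x [^]\<^bsub>?G\<^esub> l = \<one>\<^bsub>?G\<^esub>"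
      using wc_pow[OF assms(1) f, of l] xf by (simp add: wc_one)
    then have d1: "G.ord x dvd l" using G.pow_eq_id[OF xc] by simp
    let ?K = "?G\<lparr>carrier := H\<rparr>"
    interpret K: group ?K using H.subgroup_is_group G.is_group by blast
    have "x [^]\<^bsub>?K\<^esub> order ?K = \<one>\<^bsub>?K\<^esub>" using K.pow_order_eq_1 x(1) by simp
    moreover have "order ?K = order I" using iso_same_card[OF assms(6)] by (simp add: order_def)
    ultimately have "x [^]\<^bsub>?G\<^esub> order I = \<one>\<^bsub>?G\<^esub>" using G.nat_pow_consistent[of x _ H] by simp
    then have d2: "G.ord x dvd order I" using G.pow_eq_id[OF xc] by simp
    have "G.ord x = 1" using coprime_common_divisor[OF assms(4) d1 d2] by simp
    then show ?thesis using G.ord_eq_1[OF xc] by simp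
  qed
  show ?thesis
  proof (intro equalityI subsetI)
    fix y assume "y \<in> {\<one>\<^bsub>?G\<^esub>}"
    then show "y \<in> (\<Inter>g\<in>carrier ?G. {g \<otimes>\<^bsub>?G\<^esub> h \<otimes>\<^bsub>?G\<^esub> inv\<^bsub>?G\<^esub> g | h. h \<in> H})"
    proof (intro INT_I)
      fix g assume g: "g \<in> carrier ?G"
      have "y = g \<otimes>\<^bsub>?G\<^esub> \<one>\<^bsub>?G\<^esub> \<otimes>\<^bsub>?G\<^esub> inv\<^bsub>?G\<^esub> g"
        using g \<open>y \<in> {\<one>\<^bsub>?G\<^esub>}\<close> by simp
      then show "y \<in> {g \<otimes>\<^bsub>?G\<^esub> h \<otimes>\<^bsub>?G\<^esub> inv\<^bsub>?G\<^esub> g | h. h \<in> H}"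
        using H.one_closed by blast
    qed
  next
    fix n assume n: "n \<in> (\<Inter>g\<in>carrier ?G. {g \<otimes>\<^bsub>?G\<^esub> h \<otimes>\<^bsub>?G\<^esub> inv\<^bsub>?G\<^esub> g | h. h \<in> H})"
    have conj: "inv\<^bsub>?G\<^esub> g \<otimes>\<^bsub>?G\<^esub> n \<otimes>\<^bsub>?G\<^esub> g \<in> H" if g: "g \<in> carrier ?G" for g
    proof -
      obtain h where h: "h \<in> H" "n = g \<otimes>\<^bsub>?G\<^esub> h \<otimes>\<^bsub>?G\<^esub> inv\<^bsub>?G\<^esub> g" using n g by blast
      have hc: "h \<in> carrier ?G" using h by auto
      have "inv\<^bsub>?G\<^esub> g \<otimes>\<^bsub>?G\<^esub> n \<otimes>\<^bsub>?G\<^esub> g = h"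
        using g hc h(2) by (simp add: G.m_assoc flip: G.m_assoc[of "inv\<^bsub>?G\<^esub> g" g])
      then show ?thesis using h by simp
    qed
    have nH: "n \<in> H"
    proof -
      obtain h where h: "h \<in> H" "n = \<one>\<^bsub>?G\<^esub> \<otimes>\<^bsub>?G\<^esub> h \<otimes>\<^bsub>?G\<^esub> inv\<^bsub>?G\<^esub> \<one>\<^bsub>?G\<^esub>"
        using n G.one_closed by blast
      then show ?thesis using H.subset by auto
    qed
    have nc: "n \<in> carrier ?G" using nH by auto
    obtain f a where na: "n = (f, a)" by (metis prod.exhaust)
    have a: "a \<in> carrier I" and f: "f \<in> carrier I \<rightarrow>\<^sub>E {..<l}" using nc na by (auto simp: wc_carrier)
    define \<delta> where "\<delta> = (\<lambda>x\<in>carrier I. if x = \<one>\<^bsub>I\<^esub> then 1 else (0::nat))"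
    let ?g = "(\<delta>, \<one>\<^bsub>I\<^esub>)"
    have gc: "?g \<in> carrier ?G" using assms(3) by (auto simp: wc_carrier \<delta>_def)
    let ?c = "inv\<^bsub>?G\<^esub> n \<otimes>\<^bsub>?G\<^esub> (inv\<^bsub>?G\<^esub> ?g \<otimes>\<^bsub>?G\<^esub> n \<otimes>\<^bsub>?G\<^esub> ?g)"
    have cH: "?c \<in> H" using conj[OF gc] nH by (simp add: H.m_closed H.m_inv_closed)
    have "snd ?c = \<one>\<^bsub>I\<^esub>"
      using gc nc a na by (simp add: I.m_assoc)
    then have "?c = \<one>\<^bsub>?G\<^esub>" using triv cH by blast
    then have "inv\<^bsub>?G\<^esub> ?g \<otimes>\<^bsub>?G\<^esub> n \<otimes>\<^bsub>?G\<^esub> ?g = n"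
      using gc nc by (metis G.inv_closed G.inv_equality G.inv_inv G.m_closed)
    then have comm: "n \<otimes>\<^bsub>?G\<^esub> ?g = ?g \<otimes>\<^bsub>?G\<^esub> n"
      using gc nc by (metis G.inv_closed G.m_assoc G.m_closed G.r_inv G.l_one)
    have "a = \<one>\<^bsub>I\<^esub>"
    proof (rule ccontr)
      assume an: "a \<noteq> \<one>\<^bsub>I\<^esub>"
      have "fst (n \<otimes>\<^bsub>?G\<^esub> ?g) a = fst (?g \<otimes>\<^bsub>?G\<^esub> n) a" using comm by simp
      moreover have fl: "f a < l" using f a by auto
      ultimately have "(f a + 1) mod l = f a"
        using a an f by (simp add: na wc_mult \<delta>_def)
      with fl show False using mod_suc_ne assms(3) by blast
    qed
    then show "n \<in> {\<one>\<^bsub>?G\<^esub>}" using triv nH na by simp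
  qed
qed

end
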